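(* Let $T$ be an $n$-node tree, $k\ge 2$ an integer, and apply the Rake-and-Compress algorithm with parameter $k$ to $T$. Let $R$ be the set of raked nodes (the union of all rake layers $R_i$). Then every connected component of the induced subgraph $T[R]$ has diameter at most $4(\log_k n+1)+2$.
   Context: Rake-and-Compress algorithm on a tree $T$ with parameter $k\ge 2$: set $V_0=V(T)$; for $i=1,2,\dots,\lceil\log_k n+1\rceil$: (1) let $C_i$ be the set of nodes $u\in V_{i-1}$ such that $u$ and all neighbors of $u$ have degree at most $k$ in $T[V_{i-1}]$ (compress); (2) let $R_i$ be the set of nodes $u\in V_{i-1}\setminus C_i$ with degree at most $1$ in $T[V_{i-1}\setminus C_i]$ (rake); (3) set $V_i=V_{i-1}\setminus(C_i\cup R_i)$. It is known (Chang–Pettie) that every node lies in some $C_i$ or $R_i$. The layers are totally ordered by the time of marking: $C_1<R_1<C_2<R_2<\dots$; node $u$ is lower than node $v$ if $u$'s layer is lower, or they share a layer and $u$ has smaller ID. *)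

theory Defs
  imports Complex_Main
begin

definition walk :: "('a \<Rightarrow> 'a \<Rightarrow> bool) \<Rightarrow> 'a set \<Rightarrow> 'a list \<Rightarrow> bool" where
  "walk E S xs \<longleftrightarrow> xs \<noteq> [] \<and> set xs \<subseteq> S \<and>
     (\<forall>i. Suc i < length xs \<longrightarrow> E (xs ! i) (xs ! Suc i))"

definition reachable :: "('a \<Rightarrow> 'a \<Rightarrow> bool) \<Rightarrow> 'a set \<Rightarrow> 'a \<Rightarrow> 'a \<Rightarrow> bool" where
  "reachable E S u v \<longleftrightarrow> (\<exists>xs. walk E S xs \<and> hd xs = u \<and> last xs = v)"

definition gdist :: "('a \<Rightarrow> 'a \<Rightarrow> bool) \<Rightarrow> 'a set \<Rightarrow> 'a \<Rightarrow> 'a \<Rightarrow> nat" where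
  "gdist E S u v = (LEAST m. \<exists>xs. walk E S xs \<and> hd xs = u \<and> last xs = v \<and> length xs = Suc m)"

definition is_cycle :: "('a \<Rightarrow> 'a \<Rightarrow> bool) \<Rightarrow> 'a set \<Rightarrow> 'a list \<Rightarrow> bool" where
  "is_cycle E S xs \<longleftrightarrow> walk E S xs \<and> distinct xs \<and> length xs \<ge> 3 \<and> E (last xs) (hd xs)"

definition is_tree :: "'a set \<Rightarrow> ('a \<Rightarrow> 'a \<Rightarrow> bool) \<Rightarrow> bool" where
  "is_tree V E \<longleftrightarrow> finite V \<and> V \<noteq> {} \<and>
     (\<forall>u v. E u v \<longrightarrow> E v u) \<and> (\<forall>u. \<not> E u u) \<and>
     (\<forall>u v. E u v \<longrightarrow> u \<in> V \<and> v \<in> V) \<and>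
     (\<forall>u\<in>V. \<forall>v\<in>V. reachable E V u v) \<and>
     (\<nexists>xs. is_cycle E V xs)"

definition deg :: "('a \<Rightarrow> 'a \<Rightarrow> bool) \<Rightarrow> 'a set \<Rightarrow> 'a \<Rightarrow> nat" where
  "deg E S u = card {v \<in> S. E u v}"

definition compress_set :: "nat \<Rightarrow> ('a \<Rightarrow> 'a \<Rightarrow> bool) \<Rightarrow> 'a set \<Rightarrow> 'a set" where
  "compress_set k E S = {u \<in> S. deg E S u \<le> k \<and> (\<forall>v\<in>S. E u v \<longrightarrow> deg E S v \<le> k)}"

definition rake_set :: "nat \<Rightarrow> ('a \<Rightarrow> 'a \<Rightarrow> bool) \<Rightarrow> 'a set \<Rightarrow> 'a set" where
  "rake_set k E S = (let S' = S - compress_set k E S in {u \<in> S'. deg E S' u \<le> 1})"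

definition rc_step :: "nat \<Rightarrow> ('a \<Rightarrow> 'a \<Rightarrow> bool) \<Rightarrow> 'a set \<Rightarrow> 'a set" where
  "rc_step k E S = S - (compress_set k E S \<union> rake_set k E S)"

definition remaining :: "nat \<Rightarrow> 'a set \<Rightarrow> ('a \<Rightarrow> 'a \<Rightarrow> bool) \<Rightarrow> nat \<Rightarrow> 'a set" where
  "remaining k V E i = (rc_step k E ^^ i) V"

definition C_layer :: "nat \<Rightarrow> 'a set \<Rightarrow> ('a \<Rightarrow> 'a \<Rightarrow> bool) \<Rightarrow> nat \<Rightarrow> 'a set" where
  "C_layer k V E i = compress_set k E (remaining k V E (i - 1))"

definition R_layer :: "nat \<Rightarrow> 'a set \<Rightarrow> ('a \<Rightarrow> 'a \<Rightarrow> bool) \<Rightarrow> nat \<Rightarrow> 'a set" where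
  "R_layer k V E i = rake_set k E (remaining k V E (i - 1))"

definition num_iters :: "nat \<Rightarrow> nat \<Rightarrow> nat" where
  "num_iters k n = nat \<lceil>log (real k) (real n) + 1\<rceil>"

definition raked :: "nat \<Rightarrow> 'a set \<Rightarrow> ('a \<Rightarrow> 'a \<Rightarrow> bool) \<Rightarrow> 'a set" where
  "raked k V E = (\<Union>i\<in>{1..num_iters k (card V)}. R_layer k V E i)"

end

theory Submission
  imports Defs
begin

lemma left_bound:
  fixes f :: "nat \<Rightarrow> nat"
  assumes step: "\<And>j. 0<j \<Longrightarrow> j<m \<Longrightarrow> f j \<le> f (Suc j) \<Longrightarrow> f (j-1) < f j"
  and pos: "\<And>i. i \<le> m \<Longrightarrow> 1 \<le> f i"
  shows "j < m \<Longrightarrow> f j \<le> f (Suc j) \<Longrightarrow> j < f j"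
proof (induction j)
  case 0 then show ?case using pos[of 0] by simp
next
  case (Suc j)
  have "f j < f (Suc j)" using step[of "Suc j"] Suc.prems by simp
  then have "j < f j" using Suc.IH Suc.prems by simp
  then show ?case using \<open>f j < f (Suc j)\<close> by simp
qed

lemma seq_bound:
  fixes f :: "nat \<Rightarrow> nat"
  assumes s1: "\<And>j. 0<j \<Longrightarrow> j<m \<Longrightarrow> f j \<le> f (Suc j) \<Longrightarrow> f (j-1) < f j"
  and s2: "\<And>j. 0<j \<Longrightarrow> j<m \<Longrightarrow> f j \<le> f (j-1) \<Longrightarrow> f (Suc j) < f j"
  and pos: "\<And>i. i \<le> m \<Longrightarrow> 1 \<le> f i" and bnd: "\<And>i. i \<le> m \<Longrightarrow> f i \<le> L"
  shows "m \<le> 2*L"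
proof -
  define M where "M = Max (f ` {..m})"
  have "M \<in> f ` {..m}" unfolding M_def by (intro Max_in) auto
  then obtain p where p: "p \<le> m" "f p = M" by auto
  have pmax: "f i \<le> f p" if "i \<le> m" for i using p that unfolding M_def by (metis Max_ge atMost_iff finite_atMost finite_imageI image_eqI)
  define g where "g i = f (m - i)" for i
  have g1: "g (j-1) < g j" if "0<j" "j<m" "g j \<le> g (Suc j)" for j
  proof -
    have "f (m-j) \<le> f (m-j-1)" using that(3) unfolding g_def by simp
    then have "f (Suc (m-j)) < f (m-j)"
      using s2[of "m-j"] that by simp
    moreover have "m - (j-1) = Suc (m-j)" using that by simp
    ultimately show ?thesis unfolding g_def by simp
  qed
  have gpos: "\<And>i. i \<le> m \<Longrightarrow> 1 \<le> g i" unfolding g_def using pos by simp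
  have A: "p - 1 < L" if "0 < p"
  proof -
    have "f (p-1) \<le> f (Suc (p-1))" using that pmax p by simp
    then have "p - 1 < f (p-1)" using left_bound[of m f, OF s1 pos, of "p-1"] that p by simp
    moreover have "f (p-1) \<le> L" using bnd[of "p-1"] p by simp
    ultimately show ?thesis by linarith
  qed
  have B: "m - p - 1 < L" if "p < m"
  proof -
    have e1: "g (m-p-1) = f (Suc p)"
    proof -
      have "m - (m-p-1) = Suc p" using that by simp
      then show ?thesis unfolding g_def by simp
    qed
    have e2: "g (Suc (m-p-1)) = f p" using that unfolding g_def by simp
    have "g (m-p-1) \<le> g (Suc (m-p-1))" using e1 e2 pmax that by simp
    then have "m-p-1 < g (m-p-1)" using left_bound[of m g, OF g1 gpos, of "m-p-1"] that by simp
    then show ?thesis using e1 bnd[of "Suc p"] that by simp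
  qed
  show ?thesis
  proof (cases "p = 0")
    case True then show ?thesis using B by (cases "p < m") auto
  next
    case False
    then show ?thesis using A B p by (cases "p < m") auto
  qed
qed

lemma remaining_Suc: "remaining k V E (Suc i) = rc_step k E (remaining k V E i)"
  unfolding remaining_def by simp

lemma remaining_mono: "i \<le> j \<Longrightarrow> remaining k V E j \<subseteq> remaining k V E i"
proof (induction j rule: dec_induct)
  case base then show ?case by simp
next
  case (step j) then show ?case unfolding remaining_Suc rc_step_def by auto
qed

lemma remaining_sub: "remaining k V E i \<subseteq> V"
  using remaining_mono[of 0 i k V E] unfolding remaining_def by simp

lemma rake_sub: "rake_set k E S \<subseteq> S - compress_set k E S"
  unfolding rake_set_def Let_def by auto

lemma later_in_S:
  assumes "1 \<le> i" "i \<le> i'" "w \<in> R_layer k V E i'"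
  shows "w \<in> remaining k V E (i-1) - compress_set k E (remaining k V E (i-1))"
proof (cases "i' = i")
  case True
  then have "w \<in> rake_set k E (remaining k V E (i-1))" using assms(3) unfolding R_layer_def by simp
  then show ?thesis using rake_sub[of k E "remaining k V E (i-1)"] by (rule subsetD[rotated])
next
  case False
  have "w \<in> rake_set k E (remaining k V E (i'-1))" using assms(3) unfolding R_layer_def by simp
  then have "w \<in> remaining k V E (i'-1)" using rake_sub[of k E "remaining k V E (i'-1)"] by blast
  moreover have "remaining k V E (i'-1) \<subseteq> remaining k V E (Suc (i-1))"
    using False assms by (intro remaining_mono) auto
  ultimately have "w \<in> rc_step k E (remaining k V E (i-1))" unfolding remaining_Suc by blast
  then show ?thesis unfolding rc_step_def by blast
qed

lemma two_nbrs_false: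
  assumes fin: "finite V" and "1 \<le> i" "u \<in> R_layer k V E i"
    and "a \<noteq> b" "E u a" "E u b"
    and "a \<in> R_layer k V E ia" "i \<le> ia" "b \<in> R_layer k V E ib" "i \<le> ib"
  shows False
proof -
  define S where "S = remaining k V E (i-1) - compress_set k E (remaining k V E (i-1))"
  have aS: "a \<in> S" unfolding S_def by (rule later_in_S[OF assms(2) assms(8) assms(7)])
  have bS: "b \<in> S" unfolding S_def by (rule later_in_S[OF assms(2) assms(10) assms(9)])
  have "u \<in> {x \<in> S. deg E S x \<le> 1}" using assms(3) unfolding R_layer_def rake_set_def Let_def S_def by simp
  then have "deg E S u \<le> 1" by simp
  moreover have "finite {v \<in> S. E u v}" using fin remaining_sub[of k V E "i-1"] unfolding S_def
    by (auto intro: finite_subset)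
  moreover have "{a,b} \<subseteq> {v \<in> S. E u v}" using aS bS assms by auto
  ultimately have "card {a,b} \<le> 1" unfolding deg_def using card_mono[of "{v \<in> S. E u v}" "{a,b}"] by linarith
  then show False using assms(4) by simp
qed

lemma no_backtrack:
  assumes w: "walk E S xs" and j: "0 < j" "Suc j < length xs" and eq: "xs!(j-1) = xs!(Suc j)"
  shows "\<exists>ys. walk E S ys \<and> hd ys = hd xs \<and> last ys = last xs \<and> length ys + 2 = length xs"
proof -
  define ys where "ys = take j xs @ drop (Suc (Suc j)) xs"
  have len: "length ys + 2 = length xs" unfolding ys_def using j by simp
  have nth: "ys!i = (if i<j then xs!i else xs!(i+2))" if "i < length ys" for i
    using that j unfolding ys_def by (simp add: nth_append min_def)
  have ne: "ys \<noteq> []" using j unfolding ys_def by (cases xs) auto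
  have hd: "hd ys = hd xs" using j unfolding ys_def by (cases xs) auto
  have last: "last ys = last xs"
  proof (cases "Suc (Suc j) < length xs")
    case True then show ?thesis unfolding ys_def by simp
  next
    case False
    then have "length xs = Suc (Suc j)" using j by simp
    then have "ys = take j xs" unfolding ys_def by simp
    moreover have "take j xs \<noteq> []" using j by (cases xs) auto
    ultimately have "last ys = xs!(j-1)" using j by (simp add: last_conv_nth)
    also have "\<dots> = last xs" using eq \<open>length xs = Suc (Suc j)\<close> by (metis diff_Suc_1 last_conv_nth list.size(3) nat.distinct(1))
    finally show ?thesis .
  qed
  have sx: "set xs \<subseteq> S" using w unfolding walk_def by blast
  have set: "set ys \<subseteq> S" unfolding ys_def set_append
    using set_take_subset[of j xs] set_drop_subset[of "Suc (Suc j)" xs] sx by blast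
  have adj: "E (ys!i) (ys!Suc i)" if "Suc i < length ys" for i
  proof -
    have wE: "\<And>i. Suc i < length xs \<Longrightarrow> E (xs!i) (xs!Suc i)" using w unfolding walk_def by auto
    consider "Suc i < j" | "Suc i = j" | "j \<le> i" by linarith
    then show ?thesis
    proof cases
      case 1 then show ?thesis using nth[of i] nth[of "Suc i"] that wE[of i] len by simp
    next
      case 2
      then have "ys!i = xs!(Suc j)" "ys!Suc i = xs!(Suc (Suc j))"
        using nth[of i] nth[of "Suc i"] that eq by auto
      then show ?thesis using wE[of "Suc j"] that len 2 by simp
    next
      case 3 then show ?thesis using nth[of i] nth[of "Suc i"] that wE[of "i+2"] len by simp
    qed
  qed
  have "walk E S ys" unfolding walk_def using ne set adj by blast
  then show ?thesis using hd last len by blast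
qed

lemma num_iters_bound:
  assumes "k \<ge> 2" "n \<ge> 1"
  shows "real (2 * num_iters k n) \<le> 4 * (log (real k) (real n) + 1) + 2"
proof -
  have lg: "0 \<le> log (real k) (real n)" using assms by simp
  have "real (num_iters k n) = of_int \<lceil>log (real k) (real n) + 1\<rceil>"
    unfolding num_iters_def using lg by simp
  also have "\<dots> \<le> log (real k) (real n) + 2" using of_int_ceiling_le_add_one[of "log (real k) (real n) + 1"] by simp
  finally show ?thesis using lg by simp
qed

theorem mainTheorem5:
  fixes V :: "'a set" and E :: "'a \<Rightarrow> 'a \<Rightarrow> bool" and k n :: nat
  assumes "is_tree V E" and "card V = n" and "k \<ge> 2"
  shows "\<forall>u\<in>raked k V E. \<forall>v\<in>raked k V E.
           reachable E (raked k V E) u v \<longrightarrow>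
           real (gdist E (raked k V E) u v) \<le> 4 * (log (real k) (real n) + 1) + 2"
proof (intro ballI impI)
  fix u v assume u: "u \<in> raked k V E" and v: "v \<in> raked k V E"
    and r: "reachable E (raked k V E) u v"
  define R where "R = raked k V E"
  define L where "L = num_iters k (card V)"
  have fin: "finite V" and ne: "V \<noteq> {}" and sym: "\<And>a b. E a b \<Longrightarrow> E b a"
    using assms(1) unfolding is_tree_def by auto
  have n1: "n \<ge> 1" using fin ne assms(2) using card_gt_0_iff[of V] by linarith
  define P where "P m \<longleftrightarrow> (\<exists>xs. walk E R xs \<and> hd xs = u \<and> last xs = v \<and> length xs = Suc m)" for m
  have gd: "gdist E R u v = (LEAST m. P m)" unfolding gdist_def P_def by simp
  obtain xs0 where "walk E R xs0" "hd xs0 = u" "last xs0 = v" using r unfolding reachable_def R_def by blast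
  then have "P (length xs0 - 1)" unfolding P_def walk_def by auto
  then have "P (gdist E R u v)" unfolding gd by (rule LeastI)
  then obtain xs where xs: "walk E R xs" "hd xs = u" "last xs = v" "length xs = Suc (gdist E R u v)"
    unfolding P_def by blast
  define m where "m = gdist E R u v"
  have minl: "Suc m \<le> length ys" if "walk E R ys" "hd ys = u" "last ys = v" for ys
  proof -
    have "P (length ys - 1)" unfolding P_def using that unfolding walk_def by auto
    then have "m \<le> length ys - 1" unfolding m_def gd by (rule Least_le)
    then show ?thesis using that unfolding walk_def by (cases ys) auto
  qed
  define lay where "lay x = (LEAST i. 1 \<le> i \<and> i \<le> L \<and> x \<in> R_layer k V E i)" for x
  have layP: "1 \<le> lay x \<and> lay x \<le> L \<and> x \<in> R_layer k V E (lay x)" if "x \<in> R" for x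
  proof -
    have "\<exists>i. 1 \<le> i \<and> i \<le> L \<and> x \<in> R_layer k V E i" using that unfolding R_def raked_def L_def by auto
    then show ?thesis unfolding lay_def by (rule LeastI_ex)
  qed
  define f where "f i = lay (xs!i)" for i
  have inR: "xs!i \<in> R" if "i \<le> m" for i using xs that unfolding walk_def m_def by auto
  have wE: "\<And>i. Suc i < length xs \<Longrightarrow> E (xs!i) (xs!Suc i)" using xs unfolding walk_def by auto
  have dst: "xs!(j-1) \<noteq> xs!(Suc j)" if jj: "0 < j" "j < m" for j
  proof
    assume eq: "xs!(j-1) = xs!(Suc j)"
    obtain ys where "walk E R ys" "hd ys = hd xs" "last ys = last xs" "length ys + 2 = length xs"
      using no_backtrack[OF xs(1) jj(1) _ eq] jj xs(4) unfolding m_def by auto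
    then show False using minl[of ys] xs unfolding m_def by auto
  qed
  have nb: "E (xs!j) (xs!(j-1))" "E (xs!j) (xs!Suc j)" if "0 < j" "j < m" for j
  proof -
    show "E (xs!j) (xs!(j-1))" using wE[of "j-1"] that xs(4) sym unfolding m_def by simp
    show "E (xs!j) (xs!Suc j)" using wE[of j] that xs(4) unfolding m_def by simp
  qed
  have key: False if "0 < j" "j < m" "f j \<le> f (j-1)" "f j \<le> f (Suc j)" for j
  proof -
    have r1: "xs!j \<in> R" "xs!(j-1) \<in> R" "xs!Suc j \<in> R" using inR that by auto
    have l1: "1 \<le> lay (xs!j)" "xs!j \<in> R_layer k V E (lay (xs!j))" using layP[OF r1(1)] by blast+
    have l2: "xs!(j-1) \<in> R_layer k V E (lay (xs!(j-1)))" using layP[OF r1(2)] by blast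
    have l3: "xs!Suc j \<in> R_layer k V E (lay (xs!Suc j))" using layP[OF r1(3)] by blast
    have o2: "lay (xs!j) \<le> lay (xs!(j-1))" "lay (xs!j) \<le> lay (xs!Suc j)" using that(3,4) unfolding f_def by auto
    show False
      by (rule two_nbrs_false[OF fin l1 dst[OF that(1,2)] nb[OF that(1,2)] l2 o2(1) l3 o2(2)])
  qed
  have "m \<le> 2 * L"
  proof (rule seq_bound[of m f])
    fix j assume a: "0 < j" "j < m" "f j \<le> f (Suc j)"
    show "f (j-1) < f j"
    proof (rule ccontr)
      assume "\<not> f (j-1) < f j"
      then have "f j \<le> f (j-1)" by simp
      then show False using key[OF a(1,2) _ a(3)] by blast
    qed
  next
    fix j assume a: "0 < j" "j < m" "f j \<le> f (j-1)"
    show "f (Suc j) < f j"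
    proof (rule ccontr)
      assume "\<not> f (Suc j) < f j"
      then have "f j \<le> f (Suc j)" by simp
      then show False using key[OF a(1,2) a(3)] by blast
    qed
  next
    fix i assume "i \<le> m" then show "1 \<le> f i" using layP[OF inR[of i]] unfolding f_def by blast
  next
    fix i assume "i \<le> m" then show "f i \<le> L" using layP[OF inR[of i]] unfolding f_def by blast
  qed
  then have "real m \<le> real (2 * num_iters k n)" unfolding L_def using assms(2) by simp
  also have "\<dots> \<le> 4 * (log (real k) (real n) + 1) + 2" using num_iters_bound[OF assms(3) n1] .
  finally show "real (gdist E (raked k V E) u v) \<le> 4 * (log (real k) (real n) + 1) + 2"
    unfolding m_def R_def .
qed

end
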